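(* Let $G$ be a DAG and $k,r,L$ positive integers. Suppose that every SPP pebbling strategy of $G$ with fast memory of size $k\cdot r$ uses at least $L$ I/O operations. Then every MPP pebbling strategy of $G$ with $k$ processors, each having fast memory of size $r$, contains at least $L/k$ I/O steps (applications of rules (R1) and (R2)).
   Context: Single-processor red-blue pebbling (SPP) with fast memory size $r$ on a DAG $G=(V,E)$: a state is a pair $(R,B)$ of subsets of $V$ (red and blue pebbles), starting with both empty. Rules: (R1-S) place a red pebble on a node carrying a blue pebble; (R2-S) place a blue pebble on a node carrying a red pebble; (R3-S) place a red pebble on a node all of whose in-neighbors carry red pebbles (in particular on any source); (R4-S) remove any pebble. At all times $|R|\le r$; a strategy must end in a state where every sink carries a pebble. Its I/O cost is the number of applications of (R1-S) and (R2-S). Multiprocessor red-blue pebbling (MPP). Input: a DAG $G=(V,E)$ with $n=|V|$ and positive integers $k$ (number of processors), $r$ (fast-memory size per processor), $g$ (cost of an I/O step). $\Delta_{in}$ denotes the maximum in-degree of $G$; sources/sinks are nodes of in-degree/out-degree $0$. A configuration is a tuple $(R^1,\dots,R^k,B)$ of subsets of $V$ ($R^j$ = nodes carrying a red pebble of processor $j$, $B$ = nodes carrying a blue pebble); it is valid if $|R^j|\le r$ for all $j$. The initial configuration has all sets empty; a configuration is terminal if every sink lies in $B\cup\bigcup_j R^j$. The transition rules are: (R1) for some $m\le k$, pairwise distinct processors $j_1,\dots,j_m$ and nodes $v_1,\dots,v_m$ with $v_i\in R^{j_i}$, add each $v_i$ to $B$ (cost $g$); (R2) for some $m\le k$, pairwise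 distinct processors $j_1,\dots,j_m$ and nodes $v_1,\dots,v_m\in B$, add each $v_i$ to $R^{j_i}$ (cost $g$); (R3) for some $m\le k$, pairwise distinct processors $j_1,\dots,j_m$ and nodes $v_1,\dots,v_m$ such that every in-neighbor of $v_i$ lies in $R^{j_i}$, add each $v_i$ to $R^{j_i}$ (cost $1$); (R4) remove a single red or blue pebble (cost $0$). A pebbling strategy is a sequence of valid configurations starting at the initial configuration and ending at a terminal one, each obtained from its predecessor by one rule; its cost is the sum of the costs of the rules applied. $\mathrm{OPT}$ denotes the minimum cost of a pebbling strategy. Applications of (R1),(R2) are called I/O steps and applications of (R3) compute steps. *)

theory Defs
  imports Complex_Main
begin

definition is_dag :: "'v set \<Rightarrow> ('v \<times> 'v) set \<Rightarrow> bool" where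
  "is_dag V E \<longleftrightarrow> finite V \<and> E \<subseteq> V \<times> V \<and> acyclic E"

definition in_nbrs :: "('v \<times> 'v) set \<Rightarrow> 'v \<Rightarrow> 'v set" where
  "in_nbrs E v = {u. (u, v) \<in> E}"

definition sinks :: "'v set \<Rightarrow> ('v \<times> 'v) set \<Rightarrow> 'v set" where
  "sinks V E = {v \<in> V. \<forall>w. (v, w) \<notin> E}"

datatype 'v spp_move =
    SLoad 'v
  | SStore 'v
  | SCompute 'v
  | SRemRed 'v
  | SRemBlue 'v

fun spp_applicable :: "'v set \<Rightarrow> ('v \<times> 'v) set \<Rightarrow> 'v spp_move \<Rightarrow> 'v set \<times> 'v set \<Rightarrow> bool" where
  "spp_applicable V E (SLoad v) (R, B) = (v \<in> B)"
| "spp_applicable V E (SStore v) (R, B) = (v \<in> R)"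
| "spp_applicable V E (SCompute v) (R, B) = (v \<in> V \<and> in_nbrs E v \<subseteq> R)"
| "spp_applicable V E (SRemRed v) (R, B) = (v \<in> R)"
| "spp_applicable V E (SRemBlue v) (R, B) = (v \<in> B)"

fun spp_effect :: "'v spp_move \<Rightarrow> 'v set \<times> 'v set \<Rightarrow> 'v set \<times> 'v set" where
  "spp_effect (SLoad v) (R, B) = (insert v R, B)"
| "spp_effect (SStore v) (R, B) = (R, insert v B)"
| "spp_effect (SCompute v) (R, B) = (insert v R, B)"
| "spp_effect (SRemRed v) (R, B) = (R - {v}, B)"
| "spp_effect (SRemBlue v) (R, B) = (R, B - {v})"

definition spp_terminal :: "'v set \<Rightarrow> ('v \<times> 'v) set \<Rightarrow> 'v set \<times> 'v set \<Rightarrow> bool" where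
  "spp_terminal V E s \<longleftrightarrow> sinks V E \<subseteq> fst s \<union> snd s"

fun spp_run :: "'v set \<Rightarrow> ('v \<times> 'v) set \<Rightarrow> nat \<Rightarrow> 'v spp_move list \<Rightarrow> 'v set \<times> 'v set \<Rightarrow> bool" where
  "spp_run V E r [] s = spp_terminal V E s"
| "spp_run V E r (m # ms) s =
     (spp_applicable V E m s \<and> card (fst (spp_effect m s)) \<le> r
      \<and> spp_run V E r ms (spp_effect m s))"

definition spp_strategy :: "'v set \<Rightarrow> ('v \<times> 'v) set \<Rightarrow> nat \<Rightarrow> 'v spp_move list \<Rightarrow> bool" where
  "spp_strategy V E r ms \<longleftrightarrow> spp_run V E r ms ({}, {})"

fun spp_is_io :: "'v spp_move \<Rightarrow> bool" where
  "spp_is_io (SLoad v) = True"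
| "spp_is_io (SStore v) = True"
| "spp_is_io _ = False"

definition spp_io_cost :: "'v spp_move list \<Rightarrow> nat" where
  "spp_io_cost ms = length (filter spp_is_io ms)"

text \<open>Processors are indexed 0..<k. A configuration is (Rs, B) where Rs j is the
  red set of processor j (only j < k is meaningful).\<close>

type_synonym 'v mconf = "(nat \<Rightarrow> 'v set) \<times> 'v set"

datatype 'v mpp_move =
    MStore "(nat \<times> 'v) list"    \<comment> \<open>(R1): red of processor j to blue\<close>
  | MLoad "(nat \<times> 'v) list"     \<comment> \<open>(R2): blue to red of processor j\<close>
  | MCompute "(nat \<times> 'v) list"
  | MRemRed nat 'v
  | MRemBlue 'v

definition procs_ok :: "nat \<Rightarrow> (nat \<times> 'v) list \<Rightarrow> bool" where
  "procs_ok k ps \<longleftrightarrow> length ps \<le> k \<and> distinct (map fst ps) \<and> (\<forall>(j, v) \<in> set ps. j < k)"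

fun mpp_applicable :: "'v set \<Rightarrow> ('v \<times> 'v) set \<Rightarrow> nat \<Rightarrow> 'v mpp_move \<Rightarrow> 'v mconf \<Rightarrow> bool" where
  "mpp_applicable V E k (MStore ps) (Rs, B) =
     (procs_ok k ps \<and> (\<forall>(j, v) \<in> set ps. v \<in> Rs j))"
| "mpp_applicable V E k (MLoad ps) (Rs, B) =
     (procs_ok k ps \<and> (\<forall>(j, v) \<in> set ps. v \<in> B))"
| "mpp_applicable V E k (MCompute ps) (Rs, B) =
     (procs_ok k ps \<and> (\<forall>(j, v) \<in> set ps. v \<in> V \<and> in_nbrs E v \<subseteq> Rs j))"
| "mpp_applicable V E k (MRemRed j v) (Rs, B) = (j < k \<and> v \<in> Rs j)"
| "mpp_applicable V E k (MRemBlue v) (Rs, B) = (v \<in> B)"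

fun mpp_effect :: "'v mpp_move \<Rightarrow> 'v mconf \<Rightarrow> 'v mconf" where
  "mpp_effect (MStore ps) (Rs, B) = (Rs, B \<union> snd ` set ps)"
| "mpp_effect (MLoad ps) (Rs, B) = ((\<lambda>j. Rs j \<union> {v. (j, v) \<in> set ps}), B)"
| "mpp_effect (MCompute ps) (Rs, B) = ((\<lambda>j. Rs j \<union> {v. (j, v) \<in> set ps}), B)"
| "mpp_effect (MRemRed j v) (Rs, B) = (Rs(j := Rs j - {v}), B)"
| "mpp_effect (MRemBlue v) (Rs, B) = (Rs, B - {v})"

definition mpp_valid :: "nat \<Rightarrow> nat \<Rightarrow> 'v mconf \<Rightarrow> bool" where
  "mpp_valid k r c \<longleftrightarrow> (\<forall>j < k. card (fst c j) \<le> r)"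

definition mpp_terminal :: "'v set \<Rightarrow> ('v \<times> 'v) set \<Rightarrow> nat \<Rightarrow> 'v mconf \<Rightarrow> bool" where
  "mpp_terminal V E k c \<longleftrightarrow> sinks V E \<subseteq> snd c \<union> (\<Union>j < k. fst c j)"

fun mpp_run :: "'v set \<Rightarrow> ('v \<times> 'v) set \<Rightarrow> nat \<Rightarrow> nat \<Rightarrow> 'v mpp_move list \<Rightarrow> 'v mconf \<Rightarrow> bool" where
  "mpp_run V E k r [] c = mpp_terminal V E k c"
| "mpp_run V E k r (m # ms) c =
     (mpp_applicable V E k m c \<and> mpp_valid k r (mpp_effect m c)
      \<and> mpp_run V E k r ms (mpp_effect m c))"

definition mpp_strategy :: "'v set \<Rightarrow> ('v \<times> 'v) set \<Rightarrow> nat \<Rightarrow> nat \<Rightarrow> 'v mpp_move list \<Rightarrow> bool" where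
  "mpp_strategy V E k r ms \<longleftrightarrow> mpp_run V E k r ms ((\<lambda>_. {}), {})"

fun mpp_is_io :: "'v mpp_move \<Rightarrow> bool" where
  "mpp_is_io (MStore ps) = True"
| "mpp_is_io (MLoad ps) = True"
| "mpp_is_io _ = False"

definition mpp_io_steps :: "'v mpp_move list \<Rightarrow> nat" where
  "mpp_io_steps ms = length (filter mpp_is_io ms)"

end

theory Submission
  imports Defs
begin

definition Uk :: "nat \<Rightarrow> (nat \<Rightarrow> 'v set) \<Rightarrow> 'v set" where
  "Uk k Rs = (\<Union>j<k. Rs j)"

fun steps :: "'v set \<Rightarrow> ('v \<times> 'v) set \<Rightarrow> nat \<Rightarrow> 'v spp_move list \<Rightarrow> 'v set \<times> 'v set \<Rightarrow> 'v set \<times> 'v set \<Rightarrow> bool" where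
  "steps V E b [] s t = (s = t)"
| "steps V E b (m # ms) s t =
     (spp_applicable V E m s \<and> card (fst (spp_effect m s)) \<le> b \<and> steps V E b ms (spp_effect m s) t)"

lemma steps_run: "steps V E b ms s t \<Longrightarrow> spp_run V E b ts t \<Longrightarrow> spp_run V E b (ms @ ts) s"
  by (induction ms arbitrary: s) auto

lemma Uk_bound:
  assumes "\<forall>j<k. finite (Rs j)" "\<forall>j<k. card (Rs j) \<le> r"
  shows "finite (Uk k Rs) \<and> card (Uk k Rs) \<le> k * r"
proof -
  have "card (Uk k Rs) \<le> (\<Sum>j<k. card (Rs j))" unfolding Uk_def by (rule card_UN_le) simp
  also have "\<dots> \<le> k * r" using sum_bounded_above[of "{..<k}" "\<lambda>j. card (Rs j)" r] assms by simp
  finally show ?thesis using assms unfolding Uk_def by auto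
qed

lemma steps_load:
  "\<forall>v\<in>snd ` set ps. v \<in> B \<Longrightarrow> finite F \<Longrightarrow> card F \<le> b \<Longrightarrow> R \<union> snd ` set ps \<subseteq> F \<Longrightarrow>
   steps V E b (map (\<lambda>(j,v). SLoad v) ps) (R, B) (R \<union> snd ` set ps, B)"
proof (induction ps arbitrary: R)
  case Nil then show ?case by simp
next
  case (Cons p ps)
  obtain j v where p: "p = (j, v)" by (cases p)
  have "card (insert v R) \<le> card F"
    using Cons.prems p by (intro card_mono) auto
  moreover have "steps V E b (map (\<lambda>(j,v). SLoad v) ps) (insert v R, B) (insert v R \<union> snd ` set ps, B)"
    using Cons p by (intro Cons.IH) auto
  ultimately show ?case using Cons.prems p by auto
qed

lemma steps_comp:
  "\<forall>v\<in>snd ` set ps. v \<in> V \<and> in_nbrs E v \<subseteq> R \<Longrightarrow> finite F \<Longrightarrow> card F \<le> b \<Longrightarrow> R \<union> snd ` set ps \<subseteq> F \<Longrightarrow>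
   steps V E b (map (\<lambda>(j,v). SCompute v) ps) (R, B) (R \<union> snd ` set ps, B)"
proof (induction ps arbitrary: R)
  case Nil then show ?case by simp
next
  case (Cons p ps)
  obtain j v where p: "p = (j, v)" by (cases p)
  have "card (insert v R) \<le> card F"
    using Cons.prems p by (intro card_mono) auto
  moreover have "steps V E b (map (\<lambda>(j,v). SCompute v) ps) (insert v R, B) (insert v R \<union> snd ` set ps, B)"
    using Cons p by (intro Cons.IH) auto
  ultimately show ?case using Cons.prems p by auto
qed

lemma steps_store:
  "snd ` set ps \<subseteq> R \<Longrightarrow> card R \<le> b \<Longrightarrow>
   steps V E b (map (\<lambda>(j,v). SStore v) ps) (R, B) (R, B \<union> snd ` set ps)"
proof (induction ps arbitrary: B)
  case Nil then show ?case by simp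
next
  case (Cons p ps)
  obtain j v where p: "p = (j, v)" by (cases p)
  have "steps V E b (map (\<lambda>(j,v). SStore v) ps) (R, insert v B) (R, insert v B \<union> snd ` set ps)"
    using Cons p by (intro Cons.IH) auto
  then show ?case using Cons.prems p by auto
qed

lemma io_map: "length (filter spp_is_io (map (\<lambda>(j,v). f v) ps)) \<le> length ps"
  using length_filter_le[of spp_is_io "map (\<lambda>(j,v). f v) ps"] by simp

lemma Uk_add:
  assumes "\<forall>(j, v) \<in> set ps. j < k"
  shows "Uk k (\<lambda>j. Rs j \<union> {v. (j, v) \<in> set ps}) = Uk k Rs \<union> snd ` set ps"
  proof
  show "Uk k (\<lambda>j. Rs j \<union> {v. (j, v) \<in> set ps}) \<subseteq> Uk k Rs \<union> snd ` set ps"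
    unfolding Uk_def by (force simp: image_iff)
  show "Uk k Rs \<union> snd ` set ps \<subseteq> Uk k (\<lambda>j. Rs j \<union> {v. (j, v) \<in> set ps})"
  proof
    fix x assume "x \<in> Uk k Rs \<union> snd ` set ps"
    then show "x \<in> Uk k (\<lambda>j. Rs j \<union> {v. (j, v) \<in> set ps})"
    proof
      assume "x \<in> Uk k Rs" then show ?thesis unfolding Uk_def by auto
    next
      assume "x \<in> snd ` set ps"
      then obtain j where "(j, x) \<in> set ps" by force
      with assms have "j < k" by auto
      with \<open>(j, x) \<in> set ps\<close> show ?thesis unfolding Uk_def by auto
    qed
  qed
qed

lemma fin_pairs[simp]: "finite {v. (j, v) \<in> set ps}"
proof -
  have "{v. (j, v) \<in> set ps} \<subseteq> snd ` set ps" by force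
  then show ?thesis by (rule finite_subset) simp
qed

lemma move_sim:
  assumes app: "mpp_applicable V E k m c" and val: "mpp_valid k r (mpp_effect m c)"
    and fin: "\<forall>j<k. finite (fst c j)"
  shows "\<exists>seg. steps V E (k*r) seg (Uk k (fst c), snd c) (Uk k (fst (mpp_effect m c)), snd (mpp_effect m c))
     \<and> length (filter spp_is_io seg) \<le> (if mpp_is_io m then k else 0)
     \<and> (\<forall>j<k. finite (fst (mpp_effect m c) j))"
proof -
  obtain Rs B where c: "c = (Rs, B)" by (cases c)
  let ?c' = "mpp_effect m c"
  have fin': "\<forall>j<k. finite (fst ?c' j)"
    using fin c by (cases m) auto
  have bnd: "finite (Uk k (fst ?c')) \<and> card (Uk k (fst ?c')) \<le> k * r"
    using fin' val unfolding mpp_valid_def by (intro Uk_bound) auto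
  show ?thesis
  proof (cases m)
    case (MStore ps)
    have "steps V E (k*r) (map (\<lambda>(j,v). SStore v) ps) (Uk k Rs, B) (Uk k Rs, B \<union> snd ` set ps)"
    proof (rule steps_store)
      show "snd ` set ps \<subseteq> Uk k Rs"
      proof
        fix x assume "x \<in> snd ` set ps"
        then obtain j where jx: "(j, x) \<in> set ps" by force
        have "procs_ok k ps" "\<forall>(j, v) \<in> set ps. v \<in> Rs j" using app c MStore by auto
        with jx have "j < k" "x \<in> Rs j" unfolding procs_ok_def by auto
        then show "x \<in> Uk k Rs" unfolding Uk_def by auto
      qed
      show "card (Uk k Rs) \<le> k * r" using bnd c MStore by simp
    qed
    moreover have "length (filter spp_is_io (map (\<lambda>(j,v). SStore v) ps)) \<le> k"
    proof -
      have "procs_ok k ps" using app c MStore by auto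
      then have "length ps \<le> k" unfolding procs_ok_def by auto
      then show ?thesis by (rule order_trans[OF io_map])
    qed
    ultimately show ?thesis using c MStore fin' by (intro exI[of _ "map (\<lambda>(j,v). SStore v) ps"]) auto
  next
    case (MLoad ps)
    have U: "Uk k (fst ?c') = Uk k Rs \<union> snd ` set ps"
    proof -
      have "procs_ok k ps" using app c MLoad by auto
      then have "\<forall>(j, v) \<in> set ps. j < k" unfolding procs_ok_def by auto
      then show ?thesis using c MLoad by (simp add: Uk_add)
    qed
    have "steps V E (k*r) (map (\<lambda>(j,v). SLoad v) ps) (Uk k Rs, B) (Uk k Rs \<union> snd ` set ps, B)"
    proof (rule steps_load[where F="Uk k (fst ?c')"])
      have "\<forall>(j, v) \<in> set ps. v \<in> B" using app c MLoad by auto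
      then show "\<forall>v\<in>snd ` set ps. v \<in> B" by force
      show "finite (Uk k (fst ?c'))" "card (Uk k (fst ?c')) \<le> k * r" using bnd by auto
      show "Uk k Rs \<union> snd ` set ps \<subseteq> Uk k (fst ?c')" using U by simp
    qed
    moreover have "length (filter spp_is_io (map (\<lambda>(j,v). SLoad v) ps)) \<le> k"
    proof -
      have "procs_ok k ps" using app c MLoad by auto
      then have "length ps \<le> k" unfolding procs_ok_def by auto
      then show ?thesis by (rule order_trans[OF io_map])
    qed
    ultimately show ?thesis using c MLoad fin' U by (intro exI[of _ "map (\<lambda>(j,v). SLoad v) ps"]) auto
  next
    case (MCompute ps)
    have U: "Uk k (fst ?c') = Uk k Rs \<union> snd ` set ps"
    proof -
      have "procs_ok k ps" using app c MCompute by auto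
      then have "\<forall>(j, v) \<in> set ps. j < k" unfolding procs_ok_def by auto
      then show ?thesis using c MCompute by (simp add: Uk_add)
    qed
    have "\<forall>v\<in>snd ` set ps. v \<in> V \<and> in_nbrs E v \<subseteq> Uk k Rs"
    proof
      fix x assume "x \<in> snd ` set ps"
      then obtain j where jx: "(j, x) \<in> set ps" by force
      have "procs_ok k ps" "\<forall>(j, v) \<in> set ps. v \<in> V \<and> in_nbrs E v \<subseteq> Rs j" using app c MCompute by auto
      with jx have "j < k" "x \<in> V" "in_nbrs E x \<subseteq> Rs j" unfolding procs_ok_def by auto
      then show "x \<in> V \<and> in_nbrs E x \<subseteq> Uk k Rs" unfolding Uk_def by auto
    qed
    then have "steps V E (k*r) (map (\<lambda>(j,v). SCompute v) ps) (Uk k Rs, B) (Uk k Rs \<union> snd ` set ps, B)"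
    proof (rule steps_comp[where F="Uk k (fst ?c')"])
      show "finite (Uk k (fst ?c'))" "card (Uk k (fst ?c')) \<le> k * r" using bnd by auto
      show "Uk k Rs \<union> snd ` set ps \<subseteq> Uk k (fst ?c')" using U by simp
    qed
    moreover have "length (filter spp_is_io (map (\<lambda>(j,v). SCompute v) ps)) = 0"
      by (induction ps) (auto split: prod.splits)
    ultimately show ?thesis using c MCompute fin' U by (intro exI[of _ "map (\<lambda>(j,v). SCompute v) ps"]) (auto simp: filter_map)
  next
    case (MRemRed j v)
    have jk: "j < k" "v \<in> Rs j" using app c MRemRed by auto
    show ?thesis
    proof (cases "v \<in> Uk k (fst ?c')")
      case True
      have "Uk k (fst ?c') = Uk k Rs"
        using True jk c MRemRed unfolding Uk_def by (auto split: if_splits)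
      then show ?thesis using c MRemRed fin' by (intro exI[of _ "[]"]) auto
    next
      case False
      have U: "Uk k (fst ?c') = Uk k Rs - {v}"
        using False jk c MRemRed unfolding Uk_def by (auto split: if_splits)
      have "v \<in> Uk k Rs" using jk unfolding Uk_def by auto
      then show ?thesis using c MRemRed fin' U bnd by (intro exI[of _ "[SRemRed v]"]) auto
    qed
  next
    case (MRemBlue v)
    have "card (Uk k Rs) \<le> k * r" using bnd c MRemBlue by simp
    then show ?thesis using c MRemBlue fin' app by (intro exI[of _ "[SRemBlue v]"]) auto
  qed
qed

lemma sim:
  "mpp_run V E k r ms c \<Longrightarrow> \<forall>j<k. finite (fst c j) \<Longrightarrow>
   \<exists>sms. spp_run V E (k*r) sms (Uk k (fst c), snd c) \<and> spp_io_cost sms \<le> k * mpp_io_steps ms"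
proof (induction ms arbitrary: c)
  case Nil
  then show ?case
    by (intro exI[of _ "[]"]) (auto simp: mpp_terminal_def spp_terminal_def Uk_def spp_io_cost_def mpp_io_steps_def)
next
  case (Cons m ms)
  from Cons.prems have app: "mpp_applicable V E k m c" and val: "mpp_valid k r (mpp_effect m c)"
    and run: "mpp_run V E k r ms (mpp_effect m c)" by auto
  obtain seg where seg: "steps V E (k*r) seg (Uk k (fst c), snd c) (Uk k (fst (mpp_effect m c)), snd (mpp_effect m c))"
     "length (filter spp_is_io seg) \<le> (if mpp_is_io m then k else 0)"
     "\<forall>j<k. finite (fst (mpp_effect m c) j)"
    using move_sim[OF app val] Cons.prems(2) by blast
  obtain sms where sms: "spp_run V E (k*r) sms (Uk k (fst (mpp_effect m c)), snd (mpp_effect m c))"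
    "spp_io_cost sms \<le> k * mpp_io_steps ms"
    using Cons.IH[OF run seg(3)] by blast
  have "spp_run V E (k*r) (seg @ sms) (Uk k (fst c), snd c)" using steps_run seg(1) sms(1) by blast
  moreover have "spp_io_cost (seg @ sms) \<le> k * mpp_io_steps (m # ms)"
    using seg(2) sms(2) by (auto simp: spp_io_cost_def mpp_io_steps_def split: if_splits)
  ultimately show ?case by blast
qed

theorem lemma5:
  fixes V :: "'v set" and E :: "('v \<times> 'v) set" and k r L :: nat
  assumes "is_dag V E"
    and "k > 0" and "r > 0" and "L > 0"
    and "\<And>ms. spp_strategy V E (k * r) ms \<Longrightarrow> spp_io_cost ms \<ge> L"
  shows "\<And>ms. mpp_strategy V E k r ms \<Longrightarrow> real (mpp_io_steps ms) \<ge> real L / real k"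
proof -
  fix ms assume "mpp_strategy V E k r ms"
  then obtain sms where "spp_run V E (k*r) sms (Uk k (fst ((\<lambda>_. {}), {})), snd ((\<lambda>_. {}) :: nat \<Rightarrow> 'v set, {} :: 'v set))"
    "spp_io_cost sms \<le> k * mpp_io_steps ms"
    using sim[of V E k r ms "((\<lambda>_. {}), {})"] unfolding mpp_strategy_def by auto
  then have "spp_strategy V E (k*r) sms" "spp_io_cost sms \<le> k * mpp_io_steps ms"
    unfolding spp_strategy_def Uk_def by auto
  then have "L \<le> k * mpp_io_steps ms" using assms(5) by fastforce
  then have "real L \<le> real k * real (mpp_io_steps ms)" by (metis of_nat_le_iff of_nat_mult)
  then show "real (mpp_io_steps ms) \<ge> real L / real k" using assms(2)
    by (simp add: divide_le_eq mult.commute)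
qed

end
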